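(* Let $r$ be an odd prime, $p=2r$, and $\mu_i=(-1)^iA_p^{i(i+2)}$. For distinct $i,j\in\{0,1,\dots,r-2\}$, up to a unit of $\mathcal{O}_p$: (1) $\mu_i-\mu_j\sim 1$ if $i\not\equiv j\pmod 2$ and $(j-i)(i+j+2)\not\equiv0\pmod r$; (2) $\mu_i-\mu_j\sim\sqrt2$ if $i\not\equiv j\pmod 2$ and $(j-i)(i+j+2)\equiv0\pmod r$; (3) $\mu_i-\mu_j\sim 1+\alpha_p^4$ if $i\equiv j\pmod 2$.
   Context: $\alpha_p=e^{2\pi i/(4p)}$, $A_p=\alpha_p^2$, $\mathcal{O}_p=\mathbb{Z}[\alpha_p]$. $\mu_i$ is the eigenvalue of the twist map on the basis element $e_i$ of the Kauffman skein module of the solid torus, $0\le i\le d_p-1=r-2$. $a\sim b$ means $a/b$ is a unit of $\mathcal{O}_p$. *)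

theory Defs
  imports Complex_Main "HOL-Number_Theory.Number_Theory"
begin

definition alpha :: "nat \<Rightarrow> complex" where
  "alpha p = exp (2 * pi * \<i> / (4 * of_nat p))"

definition Ap :: "nat \<Rightarrow> complex" where
  "Ap p = (alpha p)^2"

definition Op :: "nat \<Rightarrow> complex set" where
  "Op p = {z. \<exists>(c :: nat \<Rightarrow> int) (n :: nat). z = (\<Sum>k<n. of_int (c k) * (alpha p)^k)}"

definition is_unit_Op :: "nat \<Rightarrow> complex \<Rightarrow> bool" where
  "is_unit_Op p u \<longleftrightarrow> u \<in> Op p \<and> u \<noteq> 0 \<and> inverse u \<in> Op p"

definition assoc_Op :: "nat \<Rightarrow> complex \<Rightarrow> complex \<Rightarrow> bool" where
  "assoc_Op p a b \<longleftrightarrow> b \<noteq> 0 \<and> is_unit_Op p (a / b)"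

definition mu :: "nat \<Rightarrow> nat \<Rightarrow> complex" where
  "mu p i = (-1)^i * (Ap p)^(i * (i + 2))"

end

theory Submission imports Defs "HOL-Analysis.Analysis" begin

lemma alpha_pow: "alpha p ^ k = exp (2 * pi * \<i> * of_nat k / (4 * of_nat p))"
  unfolding alpha_def by (simp add: exp_of_nat_mult[symmetric] field_simps)

lemma alpha_4p: "p > 0 \<Longrightarrow> alpha p ^ (4*p) = 1"
proof -
  assume p: "p > 0"
  have "alpha p ^ (4*p) = exp (2 * pi * \<i> * of_nat (4*p) / (4 * of_nat p))" by (rule alpha_pow)
  also have "\<dots> = exp (2 * of_real pi * \<i>)" using p by (intro arg_cong[where f=exp]) (simp add: field_simps)
  also have "\<dots> = 1" by simp
  finally show ?thesis .
qed

lemma alpha_2p: "p > 0 \<Longrightarrow> alpha p ^ (2*p) = -1"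
proof -
  assume p: "p > 0"
  have "alpha p ^ (2*p) = exp (2 * pi * \<i> * of_nat (2*p) / (4 * of_nat p))" by (rule alpha_pow)
  also have "\<dots> = exp (of_real pi * \<i>)" using p by (intro arg_cong[where f=exp]) (simp add: field_simps)
  also have "\<dots> = -1" by simp
  finally show ?thesis .
qed

lemma alpha_ne0: "alpha p \<noteq> 0" unfolding alpha_def by simp

lemma alpha_pow_eq_1:
  assumes "p > 0" "alpha p ^ k = 1" shows "4 * p dvd k"
proof -
  have e: "2 * pi * \<i> * of_nat k / (4 * of_nat p) = \<i> * complex_of_real (2 * pi * k / (4 * p))"
    by (simp add: field_simps)
  from assms(2) obtain n :: int where n: "Im (\<i> * complex_of_real (2 * pi * k / (4 * p))) = of_int (2*n) * pi"
    unfolding alpha_pow e exp_eq_1 by blast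
  then have "2 * pi * k / (4 * p) = 2 * n * pi" by (simp only: Im_i_times Re_complex_of_real)
  then have "real k = 4 * p * n" using assms(1) by (simp add: field_simps)
  then have "real_of_int (int k) = real_of_int (int (4*p) * n)" by simp
  then have "int k = int (4*p) * n" by (simp only: of_int_eq_iff)
  then have "int (4*p) dvd int k" by simp
  then show ?thesis by (simp only: of_nat_dvd_iff)
qed

definition OpP :: "nat \<Rightarrow> complex set" where
  "OpP p = {poly q (alpha p) | q. \<forall>k. coeff q k \<in> \<int>}"

lemma Op_eq: "Op p = OpP p"
proof
  show "Op p \<subseteq> OpP p"
  proof
    fix z assume "z \<in> Op p"
    then obtain c :: "nat \<Rightarrow> int" and n where z: "z = (\<Sum>k<n. of_int (c k) * (alpha p)^k)"
      unfolding Op_def by blast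
    define q where "q = (\<Sum>k<n. monom (of_int (c k) :: complex) k)"
    have "poly q (alpha p) = z" unfolding q_def z by (simp add: poly_sum poly_monom)
    moreover have "\<forall>m. coeff q m \<in> \<int>"
      unfolding q_def by (simp add: coeff_sum coeff_monom Ints_sum)
    ultimately show "z \<in> OpP p" unfolding OpP_def by blast
  qed
next
  show "OpP p \<subseteq> Op p"
  proof
    fix z assume "z \<in> OpP p"
    then obtain q where z: "z = poly q (alpha p)" and q: "\<forall>k. coeff q k \<in> \<int>"
      unfolding OpP_def by blast
    define c where "c k = (SOME m::int. coeff q k = of_int m)" for k
    have c: "coeff q k = of_int (c k)" for k
    proof -
      from q obtain m :: int where "coeff q k = of_int m" by (meson Ints_cases)
      then show ?thesis unfolding c_def by (rule someI)
    qed
    have "z = (\<Sum>k<Suc (degree q). of_int (c k) * (alpha p)^k)"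
      unfolding z poly_altdef c[symmetric] by (simp add: lessThan_Suc_atMost)
    then show "z \<in> Op p" unfolding Op_def by blast
  qed
qed

lemma Op_add: "x \<in> Op p \<Longrightarrow> y \<in> Op p \<Longrightarrow> x + y \<in> Op p"
  unfolding Op_eq OpP_def
  by clarsimp (metis Ints_add coeff_add poly_add)

lemma Op_mult: "x \<in> Op p \<Longrightarrow> y \<in> Op p \<Longrightarrow> x * y \<in> Op p"
  unfolding Op_eq OpP_def
  apply clarsimp
  subgoal for q1 q2
    apply (rule exI[of _ "q1 * q2"])
    apply (simp add: coeff_mult)
    by (simp add: Ints_sum Ints_mult)
  done

lemma Op_uminus: "x \<in> Op p \<Longrightarrow> - x \<in> Op p"
  unfolding Op_eq OpP_def
  by clarsimp (metis Ints_minus coeff_minus poly_minus)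

lemma Op_diff: "x \<in> Op p \<Longrightarrow> y \<in> Op p \<Longrightarrow> x - y \<in> Op p"
  using Op_add Op_uminus by (metis diff_conv_add_uminus)

lemma Op_of_int: "of_int m \<in> Op p"
  unfolding Op_eq OpP_def
  apply clarsimp
  apply (rule exI[of _ "[:of_int m:]"])
  by (simp add: coeff_pCons split: nat.split)

lemma Op_1: "1 \<in> Op p" using Op_of_int[of 1] by simp
lemma Op_of_nat: "of_nat m \<in> Op p" using Op_of_int[of "int m"] by simp

lemma Op_alpha_pow: "alpha p ^ k \<in> Op p"
  unfolding Op_eq OpP_def
  apply clarsimp
  apply (rule exI[of _ "monom 1 k"])
  by (simp add: poly_monom coeff_monom)

lemma Op_power: "x \<in> Op p \<Longrightarrow> x ^ n \<in> Op p"
  by (induction n) (simp_all add: Op_1 Op_mult)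

lemma Op_sum: "(\<And>k. k \<in> A \<Longrightarrow> f k \<in> Op p) \<Longrightarrow> sum f A \<in> Op p"
  by (induction A rule: infinite_finite_induct) (simp_all add: Op_add Op_of_int[of 0, simplified])

lemma unitI: "u \<in> Op p \<Longrightarrow> v \<in> Op p \<Longrightarrow> u * v = 1 \<Longrightarrow> is_unit_Op p u"
  unfolding is_unit_Op_def
  by (metis inverse_unique mult_zero_left zero_neq_one)

lemma unit_mult: "is_unit_Op p u \<Longrightarrow> is_unit_Op p v \<Longrightarrow> is_unit_Op p (u * v)"
  unfolding is_unit_Op_def by (simp add: Op_mult inverse_mult_distrib)

lemma unit_uminus: "is_unit_Op p u \<Longrightarrow> is_unit_Op p (- u)"
  unfolding is_unit_Op_def by (simp add: Op_uminus)

lemma unit_alpha_pow: "p > 0 \<Longrightarrow> is_unit_Op p (alpha p ^ k)"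
proof -
  assume p: "p > 0"
  have "alpha p ^ k * alpha p ^ (4*p*k - k) = alpha p ^ (4*p*k)"
    using p by (simp add: power_add[symmetric])
  also have "\<dots> = 1" using alpha_4p[OF p] by (simp add: power_mult)
  finally show ?thesis by (intro unitI[OF Op_alpha_pow Op_alpha_pow])
qed

lemma unit_neg1_pow: "p > 0 \<Longrightarrow> is_unit_Op p ((-1) ^ k)"
  by (metis alpha_2p power_mult unit_alpha_pow)

lemma assocI: "b \<noteq> 0 \<Longrightarrow> a = u * b \<Longrightarrow> is_unit_Op p u \<Longrightarrow> assoc_Op p a b"
  unfolding assoc_Op_def by simp

lemma assoc_uminus: "assoc_Op p x y \<Longrightarrow> assoc_Op p (- x) y"
  unfolding assoc_Op_def using unit_uminus by (metis minus_divide_left)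


lemma geom_Op: "z \<in> Op p \<Longrightarrow> (\<Sum>k<n. z^k) \<in> Op p"
  by (intro Op_sum Op_power)

lemma unit_case1:
  assumes z: "z \<in> Op p" and z2: "z^(2*r) = -1" and z4: "(z^4)^r = 1" and z4n: "z^4 \<noteq> 1"
    and r: "odd r"
  shows "is_unit_Op p (1 - z)"
proof -
  obtain t where rt: "r = 2*t+1" using r oddE by blast
  define G where "G n = (\<Sum>k<n. z^k)" for n
  have G: "(1 - z) * G n = 1 - z^n" for n unfolding G_def by (rule one_diff_power_eq[symmetric])
  define \<omega> where "\<omega> = z^4"
  have S: "(\<Sum>k<r. \<omega>^k) = 0"
  proof -
    have "(1 - \<omega>) * (\<Sum>k<r. \<omega>^k) = 1 - \<omega>^r" by (rule one_diff_power_eq[symmetric])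
    also have "\<dots> = 0" using z4 \<omega>_def by simp
    finally show ?thesis using z4n \<omega>_def by simp
  qed
  define w where "w = (\<Sum>k<r. G (4*k)) - of_nat t * G (2*r)"
  have "(1 - z) * w = (\<Sum>k<r. (1 - z) * G (4*k)) - of_nat t * ((1 - z) * G (2*r))"
    unfolding w_def by (simp add: sum_distrib_left algebra_simps)
  also have "\<dots> = (\<Sum>k<r. 1 - \<omega>^k) - of_nat t * 2"
    unfolding G z2 \<omega>_def by (simp add: power_mult)
  also have "\<dots> = of_nat r - of_nat t * 2"
    by (simp add: sum_subtractf S)
  also have "\<dots> = 1" using rt by simp
  finally have w: "(1 - z) * w = 1" .
  have "w \<in> Op p" unfolding w_def G_def
    by (intro Op_diff Op_sum Op_mult Op_of_nat geom_Op z)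
  then show ?thesis using w by (intro unitI[of _ _ w] Op_diff Op_1 z)
qed

lemma pow_mod_r: "\<omega>^r = (1::complex) \<Longrightarrow> \<omega>^n = \<omega>^(n mod r)"
proof -
  assume h: "\<omega>^r = 1"
  have "\<omega>^n = \<omega>^(r * (n div r) + n mod r)" by simp
  also have "\<dots> = \<omega>^(n mod r)" by (simp only: power_add power_mult h) simp
  finally show ?thesis .
qed

lemma case3_aux:
  assumes w: "\<omega> \<in> Op p" and wr: "\<omega>^r = 1" and "prime r"
    and m: "\<not> r dvd m" and s: "\<not> r dvd s" and ws: "\<omega>^s \<noteq> 1"
  shows "\<exists>u. is_unit_Op p u \<and> 1 - \<omega>^m = u * (1 - \<omega>^s)"
proof -
  have cs: "coprime s r" using s \<open>prime r\<close> by (meson coprime_commute prime_imp_coprime)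
  have cm: "coprime m r" using m \<open>prime r\<close> by (meson coprime_commute prime_imp_coprime)
  obtain x where x: "[s * x = 1] (mod r)" using cong_solve_coprime_nat[OF cs] by auto
  obtain yy where yy: "[m * yy = 1] (mod r)" using cong_solve_coprime_nat[OF cm] by auto
  have e1: "(\<omega>^s)^(x * m) = \<omega>^m"
  proof -
    have "[s * (x * m) = 1 * m] (mod r)" using cong_mult[OF x cong_refl[of m]] by (simp add: mult.assoc)
    then have "(s * (x * m)) mod r = m mod r" by (simp add: Cong.cong_def)
    then show ?thesis
      by (metis power_mult pow_mod_r[OF wr])
  qed
  have e2: "(\<omega> ^ m) ^ (yy * s) = \<omega> ^ s"
  proof -
    have "[m * (yy * s) = 1 * s] (mod r)" using cong_mult[OF yy cong_refl[of s]] by (simp add: mult.assoc)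
    then have "(m * (yy * s)) mod r = s mod r" by (simp add: Cong.cong_def)
    then show ?thesis
      by (metis power_mult pow_mod_r[OF wr])
  qed
  define u where "u = (\<Sum>k<x * m. (\<omega>^s)^k)"
  define v where "v = (\<Sum>k<yy * s. (\<omega>^m)^k)"
  have hu: "1 - \<omega>^m = u * (1 - \<omega>^s)"
    using one_diff_power_eq[of "\<omega>^s" "x * m"] e1 unfolding u_def by (simp add: mult.commute)
  have hv: "1 - \<omega>^s = v * (1 - \<omega>^m)"
    using one_diff_power_eq[of "\<omega>^m" "yy * s"] e2 unfolding v_def by (simp add: mult.commute)
  have "1 - \<omega>^s = (v * u) * (1 - \<omega>^s)" using hu hv by (simp add: mult.assoc)
  then have "v * u = 1" using ws by simp
  then have "is_unit_Op p u"
    by (intro unitI[of _ _ v]) (auto simp: u_def v_def mult.commute intro!: geom_Op Op_power w)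
  with hu show ?thesis by blast
qed


lemma alpha_8r: "r > 0 \<Longrightarrow> alpha (2*r) ^ (8*r) = 1"
  using alpha_4p[of "2*r"] by (simp add: mult.assoc)

lemma alpha_4r: "r > 0 \<Longrightarrow> alpha (2*r) ^ (4*r) = -1"
  using alpha_2p[of "2*r"] by (simp add: mult.assoc)

lemma alpha_eq1_r: "r > 0 \<Longrightarrow> alpha (2*r) ^ k = 1 \<Longrightarrow> 8 * r dvd k"
  using alpha_pow_eq_1[of "2*r" k] by (simp add: mult.assoc)

lemma L1: "[(i::nat) = i + e] (mod 2) \<longleftrightarrow> even e"
proof -
  have "i mod 2 = (i + e) mod 2 \<longleftrightarrow> (even i \<longleftrightarrow> even (i + e))"
    by (metis even_iff_mod_2_eq_zero odd_iff_mod_2_eq_one)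
  then show ?thesis unfolding Cong.cong_def even_add by blast
qed

lemma main_lt:
  fixes r p i j :: nat
  assumes "prime r" and "odd r" and p: "p = 2 * r"
    and ij: "i < j" and jr: "j \<le> r - 2"
  shows "(\<not> [i = j] (mod 2) \<and>
           \<not> [(int j - int i) * (int i + int j + 2) = 0] (mod (int r))
           \<longrightarrow> assoc_Op p (mu p i - mu p j) 1)
       \<and> (\<not> [i = j] (mod 2) \<and>
           [(int j - int i) * (int i + int j + 2) = 0] (mod (int r))
           \<longrightarrow> assoc_Op p (mu p i - mu p j) (complex_of_real (sqrt 2)))
       \<and> ([i = j] (mod 2)
           \<longrightarrow> assoc_Op p (mu p i - mu p j) (1 + (alpha p)^4))"
proof -
  have r2: "r \<ge> 2" using \<open>prime r\<close> prime_ge_2_nat by blast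
  have r3: "r \<ge> 3" using r2 \<open>odd r\<close> by (cases "r = 2") auto
  have r0: "r > 0" "p > 0" using r3 p by auto
  define \<alpha> where "\<alpha> = alpha p"
  have \<alpha>8: "\<alpha> ^ (8*r) = 1" unfolding \<alpha>_def p using alpha_8r r0 by blast
  have \<alpha>4: "\<alpha> ^ (4*r) = -1" unfolding \<alpha>_def p using alpha_4r r0 by blast
  have \<alpha>1: "\<alpha> ^ k = 1 \<Longrightarrow> 8 * r dvd k" for k unfolding \<alpha>_def p using alpha_eq1_r r0 by blast
  obtain e where e: "j = i + e" "e > 0" using ij less_imp_add_positive by blast
  define a where "a = i * (i + 2)"
  define d where "d = e * (i + j + 2)"
  have jj: "j * (j + 2) = a + d" unfolding a_def d_def e(1) by (simp add: algebra_simps)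
  define \<epsilon> where "\<epsilon> = (-1) ^ i * \<alpha> ^ (2 * a)"
  have \<epsilon>u: "is_unit_Op p \<epsilon>" unfolding \<epsilon>_def \<alpha>_def
    using r0 by (intro unit_mult unit_neg1_pow unit_alpha_pow)
  have mui: "mu p i = \<epsilon>" unfolding mu_def Ap_def \<epsilon>_def \<alpha>_def a_def by (simp only: power_mult)
  have muj: "mu p j = \<epsilon> * ((-1)^e * \<alpha>^(2*d))"
  proof -
    have "mu p j = (-1)^(i+e) * (\<alpha>^2)^(a+d)" unfolding mu_def Ap_def \<alpha>_def jj e(1)[symmetric] ..
    also have "\<dots> = \<epsilon> * ((-1)^e * \<alpha>^(2*d))" unfolding \<epsilon>_def
      unfolding power_add power_mult by (simp only: mult_ac)
    finally show ?thesis .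
  qed
  have diff: "mu p i - mu p j = \<epsilon> * (1 - (-1)^e * \<alpha>^(2*d))"
    unfolding mui muj by (simp add: algebra_simps)
  have par: "[i = j] (mod 2) \<longleftrightarrow> even e" unfolding e(1) by (rule L1)
  have dv: "[(int j - int i) * (int i + int j + 2) = 0] (mod (int r)) \<longleftrightarrow> r dvd d"
  proof -
    have "(int j - int i) * (int i + int j + 2) = int d" unfolding d_def e(1) by (simp add: algebra_simps)
    then show ?thesis unfolding Cong.cong_def by (simp only:) (simp add: mod_eq_0_iff_dvd)
  qed
  have c1: "assoc_Op p (mu p i - mu p j) 1" if eo: "odd e" and nd: "\<not> r dvd d"
  proof -
    define z where "z = \<alpha> ^ (4*r + 2*d)"
    have zz: "z = -(\<alpha>^(2*d))" unfolding z_def power_add \<alpha>4 by simp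
    have dodd: "odd d" unfolding d_def using eo e(1) by simp
    have "z ^ (2*r) = (\<alpha>^(4*r)) ^ (2*r + d)" unfolding z_def power_mult[symmetric]
      by (simp add: algebra_simps)
    also have "\<dots> = -1" unfolding \<alpha>4 using dodd by simp
    finally have z2: "z ^ (2*r) = -1" .
    have z4: "z ^ 4 = \<alpha> ^ (8*d)"
    proof -
      have "z ^ 4 = (\<alpha>^(8*r))^2 * \<alpha>^(8*d)" unfolding z_def power_mult[symmetric] power_add[symmetric]
        by (simp add: algebra_simps)
      then show ?thesis using \<alpha>8 by simp
    qed
    have z4r: "(z^4)^r = 1" unfolding z4 power_mult[symmetric]
      by (metis \<alpha>8 mult.assoc mult.commute power_mult power_one)
    have z4n: "z^4 \<noteq> 1"
    proof
      assume "z^4 = 1"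
      then have "8 * r dvd 8 * d" using \<alpha>1 z4 by metis
      then show False using nd by simp
    qed
    have "z \<in> Op p" unfolding z_def \<alpha>_def by (rule Op_alpha_pow)
    then have u: "is_unit_Op p (1 - z)" using unit_case1 z2 z4r z4n \<open>odd r\<close> by blast
    have "mu p i - mu p j = (\<epsilon> * (1 - z)) * 1" unfolding diff zz using eo by simp
    then show ?thesis by (intro assocI[OF _ _ unit_mult[OF \<epsilon>u u]]) simp_all
  qed
  have c2: "assoc_Op p (mu p i - mu p j) (complex_of_real (sqrt 2))" if eo: "odd e" and dd: "r dvd d"
  proof -
    have dodd: "odd d" unfolding d_def using eo e(1) by simp
    obtain m where m: "d = r * m" using dd by blast
    have modd: "odd m" using dodd m by simp
    have a4': "\<alpha>^(4*d) = (\<alpha>^(4*r))^m" unfolding m by (metis power_mult mult.assoc)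
    have a4: "\<alpha>^(4*d) = -1" unfolding a4' \<alpha>4 using modd by simp
    define y where "y = 1 + \<alpha>^(2*d)"
    define s where "s = complex_of_real (sqrt 2)"
    have s2: "s^2 = 2" unfolding s_def by (simp flip: of_real_power)
    have s0: "s \<noteq> 0" unfolding s_def by simp
    have "y^2 = 1 + 2 * \<alpha>^(2*d) + \<alpha>^(4*d)" unfolding y_def
      by (simp add: power2_eq_square algebra_simps power_add[symmetric])
    also have "\<dots> = 2 * \<alpha>^(2*d)" using a4 by simp
    finally have "(y / s)^2 = (\<alpha>^d)^2" using s2 s0
      by (simp add: power_divide power_mult[symmetric] mult.commute)
    then have "y / s = \<alpha>^d \<or> y / s = -(\<alpha>^d)" by (simp add: power2_eq_iff)
    then obtain v where v: "y / s = v" "is_unit_Op p v"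
      using unit_alpha_pow[OF r0(2), of d] unit_uminus unfolding \<alpha>_def by blast
    have "mu p i - mu p j = (\<epsilon> * v) * s" unfolding diff using eo v(1) s0 y_def
      by (simp add: field_simps)
    then show ?thesis unfolding s_def[symmetric]
      by (intro assocI[OF s0 _ unit_mult[OF \<epsilon>u v(2)]])
  qed
  have c3: "assoc_Op p (mu p i - mu p j) (1 + (alpha p)^4)" if ee: "even e"
  proof -
    obtain u where u: "e = 2 * u" using ee by blast
    define m where "m = u * (i + u + 1)"
    have dm: "2 * d = 8 * m" unfolding d_def m_def u e(1) by (simp add: algebra_simps)
    define \<omega> where "\<omega> = \<alpha> ^ 8"
    obtain t where t: "r = 2 * t + 1" using \<open>odd r\<close> oddE by blast
    define s where "s = t + 1"
    have ws: "\<omega> ^ s = -(\<alpha>^4)"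
    proof -
      have "8 * s = 4 * r + 4" unfolding s_def t by simp
      then have "\<omega> ^ s = \<alpha> ^ (4 * r + 4)" unfolding \<omega>_def power_mult[symmetric] by simp
      also have "\<dots> = -(\<alpha>^4)" unfolding power_add \<alpha>4 by simp
      finally show ?thesis .
    qed
    have wr: "\<omega> ^ r = 1" unfolding \<omega>_def power_mult[symmetric] using \<alpha>8 by (simp add: mult.commute)
    have "0 < s" "s < r" using r3 unfolding s_def t by auto
    then have sr: "\<not> r dvd s" by (simp add: nat_dvd_not_less)
    have u0: "u > 0" "u < r" using e u jr r3 by auto
    have iu: "i + u + 1 > 0" "i + u + 1 < r" using e u jr r3 by auto
    have n1: "\<not> r dvd u" using u0 by (simp add: nat_dvd_not_less)
    have n2: "\<not> r dvd (i + u + 1)" using iu by (simp add: nat_dvd_not_less)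
    have mr: "\<not> r dvd m" unfolding m_def prime_dvd_mult_iff[OF \<open>prime r\<close>] using n1 n2 by (simp only: de_Morgan_disj) simp
    have wsn: "\<omega> ^ s \<noteq> 1"
    proof
      assume h: "\<omega> ^ s = 1"
      have "\<alpha> ^ (8 * s) = 1" using h unfolding \<omega>_def by (simp add: power_mult)
      then have "8 * r dvd 8 * s" by (rule \<alpha>1)
      then show False using sr by simp
    qed
    have "\<omega> \<in> Op p" unfolding \<omega>_def \<alpha>_def by (rule Op_alpha_pow)
    from case3_aux[OF this wr \<open>prime r\<close> mr sr wsn] obtain q where
      q: "is_unit_Op p q" "1 - \<omega>^m = q * (1 - \<omega>^s)" by blast
    have m1: "(-1::complex)^e = 1" using ee by simp
    have a2: "\<alpha>^(2*d) = \<omega>^m" unfolding dm \<omega>_def by (simp add: power_mult)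
    have w1: "1 - \<omega>^s = 1 + \<alpha>^4" unfolding ws by simp
    have nz: "1 + \<alpha>^4 \<noteq> 0"
    proof
      assume h: "1 + \<alpha>^4 = 0"
      have "\<omega>^s = 1 - (1 + \<alpha>^4)" using ws by simp
      with h wsn show False by simp
    qed
    have "mu p i - mu p j = (\<epsilon> * q) * (1 + \<alpha>^4)" unfolding diff m1 a2 using q(2) w1 by simp
    then show ?thesis unfolding \<alpha>_def
      by (intro assocI[OF _ _ unit_mult[OF \<epsilon>u q(1)]] nz[unfolded \<alpha>_def])
  qed
  show ?thesis using c1 c2 c3 par dv by blast
qed


theorem lemma3p2:
  fixes r p i j :: nat
  assumes "prime r" and "odd r" and "p = 2 * r"
    and "i \<le> r - 2" and "j \<le> r - 2" and "i \<noteq> j"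
  shows "(\<not> [i = j] (mod 2) \<and>
           \<not> [(int j - int i) * (int i + int j + 2) = 0] (mod (int r))
           \<longrightarrow> assoc_Op p (mu p i - mu p j) 1)
       \<and> (\<not> [i = j] (mod 2) \<and>
           [(int j - int i) * (int i + int j + 2) = 0] (mod (int r))
           \<longrightarrow> assoc_Op p (mu p i - mu p j) (complex_of_real (sqrt 2)))
       \<and> ([i = j] (mod 2)
           \<longrightarrow> assoc_Op p (mu p i - mu p j) (1 + (alpha p)^4))"
proof (cases "i < j")
  case True
  then show ?thesis using main_lt assms by blast
next
  case False
  then have ji: "j < i" using assms(6) by simp
  have M: "(\<not> [j = i] (mod 2) \<and>
           \<not> [(int i - int j) * (int j + int i + 2) = 0] (mod (int r))
           \<longrightarrow> assoc_Op p (mu p j - mu p i) 1)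
       \<and> (\<not> [j = i] (mod 2) \<and>
           [(int i - int j) * (int j + int i + 2) = 0] (mod (int r))
           \<longrightarrow> assoc_Op p (mu p j - mu p i) (complex_of_real (sqrt 2)))
       \<and> ([j = i] (mod 2)
           \<longrightarrow> assoc_Op p (mu p j - mu p i) (1 + (alpha p)^4))"
    using main_lt[OF assms(1,2,3) ji assms(4)] .
  have c1: "[j = i] (mod 2) \<longleftrightarrow> [i = j] (mod 2)" by (rule cong_sym_eq)
  have e: "(int i - int j) * (int j + int i + 2) = - ((int j - int i) * (int i + int j + 2))"
    by (simp add: algebra_simps)
  have c2: "[(int i - int j) * (int j + int i + 2) = 0] (mod (int r)) \<longleftrightarrow>
            [(int j - int i) * (int i + int j + 2) = 0] (mod (int r))"
    unfolding e cong_0_iff by (rule dvd_minus_iff)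
  have n: "mu p i - mu p j = - (mu p j - mu p i)" by simp
  show ?thesis using M unfolding c1 c2 n by (blast intro: assoc_uminus)
qed

end
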